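(* Let $f(x)=a_nx^n+\dots+a_1x+a_0\in\mathbb{O}[x]$ with $n\ge1$ and $a_n\neq0$, where $\mathbb{O}$ is the real octonion algebra. Then every root $r\in\mathbb{O}$ of $f(x)$ and every root $r\in\mathbb{O}$ of $f'(x)$ satisfies $|r|<\widetilde R_1(f)=\frac{1}{|a_n|}\sqrt{|a_n|^2+|a_{n-1}|^2+\dots+|a_0|^2}$, $|r|<\widetilde R_2(f)=1+\frac{1}{|a_n|}\max_{0\le k\le n-1}|a_k|$, and $|r|\le\widetilde R_3(f)=\max\{1,\frac{1}{|a_n|}(|a_{n-1}|+\dots+|a_0|)\}$; i.e. $\rho(f),\rho(f')<\widetilde R_1(f)$, $\rho(f),\rho(f')<\widetilde R_2(f)$, $\rho(f),\rho(f')\le\widetilde R_3(f)$.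
   Context: $\mathbb{O}=(-1,-1,-1)_{\mathbb{R}}$ is the real Cayley--Dickson algebra obtained from $\mathbb{R}$ by three doublings $B\{\gamma\}=B\times B$, $(a,b)(c,d)=(ac+\gamma\bar d b,\ da+b\bar c)$, $\overline{(a,b)}=(\bar a,-b)$, with $\gamma=-1$. Norm $\mathrm{n}(\lambda)=\bar\lambda\lambda$ and $|\lambda|=\sqrt{\mathrm{n}(\lambda)}$ (Euclidean norm). $\mathbb{O}[x]=\mathbb{O}\otimes_{\mathbb{R}}\mathbb{R}[x]$ with central $x$; substitution $f(r)=\sum_k a_k(r^k)$; formal derivative $f'(x)=\sum_k ka_kx^{k-1}$. The spectral radius of $g$ is $\rho(g)=\sup\{|\lambda|:\lambda\in\mathbb{O},\ g(\lambda)=0\}$. *)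

theory Defs
  imports "HOL-Analysis.Analysis"
begin

text \<open>Cayley--Dickson doubling B{gamma} = B x B with gamma = -1:
  (a,b)(c,d) = (ac - conj(d) b, da + b conj(c)),  conj(a,b) = (conj a, -b).\<close>

definition cd_mult :: "('a::ab_group_add \<Rightarrow> 'a \<Rightarrow> 'a) \<Rightarrow> ('a \<Rightarrow> 'a)
    \<Rightarrow> 'a \<times> 'a \<Rightarrow> 'a \<times> 'a \<Rightarrow> 'a \<times> 'a" where
  "cd_mult m cj x y = (m (fst x) (fst y) - m (cj (snd y)) (snd x),
                       m (snd y) (fst x) + m (snd x) (cj (fst y)))"

definition cd_cnj :: "('a::ab_group_add \<Rightarrow> 'a) \<Rightarrow> 'a \<times> 'a \<Rightarrow> 'a \<times> 'a" where
  "cd_cnj cj x = (cj (fst x), - snd x)"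

type_synonym cplx = "real \<times> real"
type_synonym quat = "cplx \<times> cplx"
type_synonym oct = "quat \<times> quat"

definition c_mult :: "cplx \<Rightarrow> cplx \<Rightarrow> cplx" where "c_mult = cd_mult (*) id"
definition c_cnj :: "cplx \<Rightarrow> cplx" where "c_cnj = cd_cnj id"
definition q_mult :: "quat \<Rightarrow> quat \<Rightarrow> quat" where "q_mult = cd_mult c_mult c_cnj"
definition q_cnj :: "quat \<Rightarrow> quat" where "q_cnj = cd_cnj c_cnj"
definition o_mult :: "oct \<Rightarrow> oct \<Rightarrow> oct" where "o_mult = cd_mult q_mult q_cnj"
definition o_cnj :: "oct \<Rightarrow> oct" where "o_cnj = cd_cnj q_cnj"

definition o_one :: oct where "o_one = (((1, 0), (0, 0)), ((0, 0), (0, 0)))"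

text \<open>Powers (octonions are power-associative).\<close>
primrec o_pow :: "oct \<Rightarrow> nat \<Rightarrow> oct" where
  "o_pow r 0 = o_one"
| "o_pow r (Suc k) = o_mult r (o_pow r k)"

definition o_peval :: "(nat \<Rightarrow> oct) \<Rightarrow> nat \<Rightarrow> oct \<Rightarrow> oct" where
  "o_peval a n r = (\<Sum>k\<le>n. o_mult (a k) (o_pow r k))"

definition o_pderiv_eval :: "(nat \<Rightarrow> oct) \<Rightarrow> nat \<Rightarrow> oct \<Rightarrow> oct" where
  "o_pderiv_eval a n r = (\<Sum>k=1..n. o_mult (real k *\<^sub>R a k) (o_pow r (k - 1)))"

text \<open>The Euclidean norm |lambda| is the product norm on nested pairs of reals.\<close>

end

theory Submission
  imports Defs
begin

lemma geomH:
  fixes B D u :: real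
  assumes B: "B > 0" and u: "u \<ge> 1" and h: "B * u^m \<le> D * (\<Sum>k<m. u^k)"
  shows "B * (u - 1) < D"
proof -
  have um: "u^m > 0" using u by simp
  have s0: "(\<Sum>k<m. u^k) \<ge> 0" using u by (simp add: sum_nonneg)
  have D: "D > 0"
  proof (rule ccontr)
    assume "\<not> D > 0"
    then have "D * (\<Sum>k<m. u^k) \<le> 0" using s0 by (simp add: mult_nonpos_nonneg)
    moreover have "B * u^m > 0" using B um by simp
    ultimately show False using h by linarith
  qed
  have "B * u^m * (u - 1) \<le> D * (\<Sum>k<m. u^k) * (u - 1)"
    using h u by (simp add: mult_right_mono)
  also have "\<dots> = D * (u^m - 1)" using power_diff_1_eq[of u m] by (simp only: mult_ac)
  also have "\<dots> < D * u^m" using D by simp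
  finally have "u^m * (B * (u - 1)) < u^m * D" by (simp add: algebra_simps)
  then show ?thesis using um by simp
qed

lemma realG:
  fixes A t C M S :: real and c :: "nat \<Rightarrow> real"
  assumes A: "A > 0" and c: "\<And>k. c k \<ge> 0" and t: "t \<ge> 0"
    and h: "A * t^m \<le> (\<Sum>k<m. c k * t^k)"
    and hC: "(\<Sum>k<m. (c k)^2) \<le> C" and hM: "\<And>k. k < m \<Longrightarrow> c k \<le> M"
    and hS: "(\<Sum>k<m. c k) \<le> S"
  shows "t < sqrt (A^2 + C) / A \<and> t < 1 + M / A \<and> t \<le> max 1 (S / A)"
proof -
  have m: "m \<ge> 1"
  proof (rule ccontr)
    assume "\<not> m \<ge> 1" then have "m = 0" by simp
    then show False using h A by simp
  qed
  have C0: "C \<ge> 0" using hC by (meson order_trans sum_nonneg zero_le_power2)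
  have M0: "M \<ge> 0" using hM[of 0] c[of 0] m by simp
  have P3: "t \<le> max 1 (S / A)"
  proof (cases "t \<le> 1")
    case True then show ?thesis by simp
  next
    case False
    have "(\<Sum>k<m. c k * t^k) \<le> (\<Sum>k<m. c k * t^(m-1))"
      apply (rule sum_mono) apply (rule mult_left_mono)
      using False c by (auto intro!: power_increasing)
    also have "\<dots> = (\<Sum>k<m. c k) * t^(m-1)" by (simp add: sum_distrib_right)
    also have "\<dots> \<le> S * t^(m-1)" using hS t by (simp add: mult_right_mono)
    finally have "A * t^m \<le> S * t^(m-1)" using h by linarith
    moreover have "t^m = t * t^(m-1)" using m by (metis One_nat_def Suc_diff_le diff_Suc_1 power_Suc)
    ultimately have "t^(m-1) * (A * t) \<le> t^(m-1) * S" by (simp add: algebra_simps)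
    then have "A * t \<le> S" using False by simp
    then have "t \<le> S / A" using A by (simp add: field_simps)
    then show ?thesis by simp
  qed
  have P2: "t < 1 + M / A"
  proof (cases "t < 1")
    case True then show ?thesis using M0 A by (smt (verit) divide_nonneg_pos)
  next
    case False
    have "(\<Sum>k<m. c k * t^k) \<le> (\<Sum>k<m. M * t^k)"
      apply (rule sum_mono) using hM t by (auto intro!: mult_right_mono)
    then have "A * t^m \<le> M * (\<Sum>k<m. t^k)" using h by (simp add: sum_distrib_left)
    from geomH[OF A _ this] False have "A * (t - 1) < M" by simp
    then have "t - 1 < M / A" using A by (simp add: field_simps)
    then show ?thesis by simp
  qed
  have P1: "t < sqrt (A^2 + C) / A"
  proof (cases "t < 1")
    case True
    have "1 \<le> sqrt (A^2 + C) / A" using A C0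
      by (simp add: le_divide_eq real_le_rsqrt)
    then show ?thesis using True by simp
  next
    case False
    have "(A * t^m)^2 \<le> (\<Sum>k<m. c k * t^k)^2"
      using h A t by (simp add: power_mono)
    also have "\<dots> \<le> (\<Sum>k<m. (c k)^2) * (\<Sum>k<m. (t^k)^2)" by (rule Cauchy_Schwarz_ineq_sum)
    also have "\<dots> \<le> C * (\<Sum>k<m. (t^k)^2)" using hC by (simp add: mult_right_mono sum_nonneg)
    finally have "A^2 * (t^2)^m \<le> C * (\<Sum>k<m. (t^2)^k)"
      by (simp add: power_mult_distrib power_mult[symmetric] mult.commute)
    from geomH[OF _ _ this] A False have "A^2 * (t^2 - 1) < C"
      by (simp add: one_le_power)
    then have "t^2 < (A^2 + C) / A^2" using A by (simp add: field_simps)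
    then have "sqrt (t^2) < sqrt ((A^2 + C) / A^2)" by (simp only: real_sqrt_less_mono)
    then show ?thesis using A t by (simp add: real_sqrt_divide)
  qed
  show ?thesis using P1 P2 P3 by simp
qed
lemma onorm2: "(norm (o_mult x y))^2 = (norm x)^2 * (norm y)^2"
proof -
  obtain a1 a2 a3 a4 a5 a6 a7 a8 where x: "x = (((a1,a2),(a3,a4)),((a5,a6),(a7,a8)))" by (metis prod.exhaust)
  obtain b1 b2 b3 b4 b5 b6 b7 b8 where y: "y = (((b1,b2),(b3,b4)),((b5,b6),(b7,b8)))" by (metis prod.exhaust)
  show ?thesis unfolding x y
    by (simp add: o_mult_def q_mult_def c_mult_def cd_mult_def q_cnj_def c_cnj_def cd_cnj_def
         norm_Pair power2_eq_square) algebra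
qed

lemma onorm: "norm (o_mult x y) = norm x * norm y"
proof -
  have "(norm (o_mult x y))^2 = (norm x * norm y)^2" using onorm2 by (simp add: power_mult_distrib)
  then show ?thesis by (simp add: power2_eq_iff_nonneg)
qed

lemma onorm_pow: "norm (o_pow r k) = norm r ^ k"
  by (induction k) (auto simp: onorm o_one_def norm_Pair)

lemma sum_shift1: "(\<Sum>k=1..N. g k) = (\<Sum>j<N. g (Suc j) :: real)"
  by (induction N) auto

theorem corollary4p15:
  fixes a :: "nat \<Rightarrow> oct" and n :: nat and r :: oct
  assumes "n \<ge> 1" and "a n \<noteq> 0"
    and "o_peval a n r = 0 \<or> o_pderiv_eval a n r = 0"
  shows "norm r < sqrt (\<Sum>k\<le>n. (norm (a k))\<^sup>2) / norm (a n)
       \<and> norm r < 1 + Max ((\<lambda>k. norm (a k)) ` {..<n}) / norm (a n)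
       \<and> norm r \<le> max 1 ((\<Sum>k<n. norm (a k)) / norm (a n))"
proof -
  define t where "t = norm r"
  define A where "A = norm (a n)"
  have A: "A > 0" using assms(2) by (simp add: A_def)
  have t: "t \<ge> 0" by (simp add: t_def)
  have fin: "finite ((\<lambda>k. norm (a k)) ` {..<n})" "(\<lambda>k. norm (a k)) ` {..<n} \<noteq> {}"
    using assms(1) by (auto simp: lessThan_empty_iff)
  have sq: "(\<Sum>k\<le>n. (norm (a k))\<^sup>2) = A^2 + (\<Sum>k<n. (norm (a k))\<^sup>2)"
    by (simp add: A_def lessThan_Suc_atMost[symmetric])
  have maxge: "\<And>k. k < n \<Longrightarrow> norm (a k) \<le> Max ((\<lambda>k. norm (a k)) ` {..<n})"
    using fin by (intro Max_ge) auto
  have main: "\<exists>m c. (\<forall>k. c k \<ge> (0::real)) \<and> A * t^m \<le> (\<Sum>k<m. c k * t^k)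
       \<and> (\<Sum>k<m. (c k)^2) \<le> (\<Sum>k<n. (norm (a k))\<^sup>2)
       \<and> (\<forall>k<m. c k \<le> Max ((\<lambda>k. norm (a k)) ` {..<n}))
       \<and> (\<Sum>k<m. c k) \<le> (\<Sum>k<n. norm (a k))"
    using assms(3)
  proof
    assume f: "o_peval a n r = 0"
    have "o_mult (a n) (o_pow r n) = - (\<Sum>k<n. o_mult (a k) (o_pow r k))"
      using f unfolding o_peval_def by (simp add: lessThan_Suc_atMost[symmetric] eq_neg_iff_add_eq_0 add.commute)
    then have "norm (o_mult (a n) (o_pow r n)) = norm (\<Sum>k<n. o_mult (a k) (o_pow r k))" by simp
    then have "A * t^n = norm (\<Sum>k<n. o_mult (a k) (o_pow r k))"
      by (simp add: onorm onorm_pow A_def t_def)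
    also have "\<dots> \<le> (\<Sum>k<n. norm (a k) * t^k)"
      by (rule order_trans[OF norm_sum]) (simp add: onorm onorm_pow t_def)
    finally show ?thesis using maxge
      by (intro exI[of _ n] exI[of _ "\<lambda>k. norm (a k)"]) auto
  next
    assume f: "o_pderiv_eval a n r = 0"
    obtain N where N: "n = Suc N" using assms(1) by (cases n) auto
    define c where "c j = (real (Suc j) / real n) * norm (a (Suc j))" for j
    have c0: "\<And>k. c k \<ge> 0" by (simp add: c_def)
    have cle: "c j \<le> norm (a (Suc j))" if "j < N" for j
    proof -
      have "real (Suc j) / real n \<le> 1" using that N by simp
      then show ?thesis unfolding c_def by (intro mult_left_le_one_le) auto
    qed
    have "(\<Sum>k=1..n. o_mult (real k *\<^sub>R a k) (o_pow r (k - 1))) = 0"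
      using f by (simp add: o_pderiv_eval_def)
    then have "(\<Sum>k=1..N. o_mult (real k *\<^sub>R a k) (o_pow r (k - 1)))
         + o_mult (real n *\<^sub>R a n) (o_pow r N) = 0"
      using N by (simp add: sum.atLeast1_atMost_eq sum.cl_ivl_Suc)
    then have "o_mult (real n *\<^sub>R a n) (o_pow r N) = - (\<Sum>k=1..N. o_mult (real k *\<^sub>R a k) (o_pow r (k - 1)))"
      by (simp add: eq_neg_iff_add_eq_0 add.commute)
    then have "norm (o_mult (real n *\<^sub>R a n) (o_pow r N)) = norm (\<Sum>k=1..N. o_mult (real k *\<^sub>R a k) (o_pow r (k - 1)))" by simp
    then have "real n * (A * t^N) = norm (\<Sum>k=1..N. o_mult (real k *\<^sub>R a k) (o_pow r (k - 1)))"
      by (simp add: onorm onorm_pow A_def t_def)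
    also have "\<dots> \<le> (\<Sum>k=1..N. real k * norm (a k) * t^(k-1))"
      by (rule order_trans[OF norm_sum]) (simp add: onorm onorm_pow t_def)
    also have "\<dots> = (\<Sum>j<N. real (Suc j) * norm (a (Suc j)) * t^j)"
      using sum_shift1[of "\<lambda>k. real k * norm (a k) * t^(k-1)" N] by simp
    also have "\<dots> = real n * (\<Sum>j<N. c j * t^j)"
      using N by (simp add: c_def sum_distrib_left)
    finally have ineq: "A * t^N \<le> (\<Sum>j<N. c j * t^j)" using N by simp
    have s1: "(\<Sum>j<N. (c j)^2) \<le> (\<Sum>k<n. (norm (a k))\<^sup>2)"
    proof -
      have "(\<Sum>j<N. (c j)^2) \<le> (\<Sum>j<N. (norm (a (Suc j)))^2)"
        using cle c0 by (intro sum_mono power_mono) auto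
      also have "\<dots> = (\<Sum>k<n. (norm (a k))\<^sup>2) - (norm (a 0))^2"
        unfolding N sum.lessThan_Suc_shift by simp
      finally show ?thesis by (smt (verit) zero_le_power2)
    qed
    have s2: "(\<Sum>j<N. c j) \<le> (\<Sum>k<n. norm (a k))"
    proof -
      have "(\<Sum>j<N. c j) \<le> (\<Sum>j<N. norm (a (Suc j)))"
        using cle by (intro sum_mono) auto
      also have "\<dots> = (\<Sum>k<n. norm (a k)) - norm (a 0)"
        unfolding N sum.lessThan_Suc_shift by simp
      finally show ?thesis by (smt (verit) norm_ge_zero)
    qed
    have s3: "\<forall>k<N. c k \<le> Max ((\<lambda>k. norm (a k)) ` {..<n})"
      using cle maxge N by (meson Suc_mono order_trans)
    show ?thesis using c0 ineq s1 s2 s3 by blast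
  qed
  then obtain m c where "\<forall>k. c k \<ge> (0::real)" "A * t^m \<le> (\<Sum>k<m. c k * t^k)"
       "(\<Sum>k<m. (c k)^2) \<le> (\<Sum>k<n. (norm (a k))\<^sup>2)"
       "\<forall>k<m. c k \<le> Max ((\<lambda>k. norm (a k)) ` {..<n})"
       "(\<Sum>k<m. c k) \<le> (\<Sum>k<n. norm (a k))" by blast
  note hh = this
  have "t < sqrt (A^2 + (\<Sum>k<n. (norm (a k))\<^sup>2)) / A \<and> t < 1 + Max ((\<lambda>k. norm (a k)) ` {..<n}) / A
     \<and> t \<le> max 1 ((\<Sum>k<n. norm (a k)) / A)"
    by (rule realG[OF A _ t hh(2-3) _ hh(5)]) (use hh(1,4) in auto)
  then show ?thesis unfolding sq by (simp add: t_def A_def)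
qed
end
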